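(* Let $f$ be analytic in the open unit disk $D$ and let $\varepsilon\in(0,1)$. Then there is a constant $C(f,\varepsilon)>0$, depending only on $f$ and $\varepsilon$, such that for every $x\in(0,1)$, every integer $n\ge n_0(x)$, and every $z$ with $|z|\le(1-\varepsilon)x$, \[ |r_n(f;z)|\le C(f,\varepsilon)\,\frac{(1-\varepsilon/2)^{2n}\,x^{2n+1}}{(1-x)^{2n+2}}\cdot\frac{(n!)^2}{((2n)!)^2}. \]
   Context: For $n\ge1$ let $y_n(z)=\sum_{k=0}^{n}\frac{(n+k)!}{(n-k)!\,k!}\left(\frac{z}{2}\right)^k$ be the $n$-th Bessel polynomial and let $\alpha_{n1},\dots,\alpha_{nn}$ be its zeros (they are simple). Put $a_{nk}=1-\alpha_{nk}/2$ and $b_{nk}=1+\alpha_{nk}/2$ for $k=1,\dots,n$. For $f$ analytic where needed define $r_n(f;z)=zf'(z)-\sum_{k=1}^n\big(f(a_{nk}z)-f(b_{nk}z)\big)$. For $x\in(0,1)$ put $n_0(x)=\max\{14,\;x^2(1-x)^{-2}\}-1$. *)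

theory Defs
  imports "HOL-Analysis.Analysis" "HOL-Computational_Algebra.Polynomial"
begin

definition bessel_poly :: "nat \<Rightarrow> complex poly" where
  "bessel_poly n = (\<Sum>k\<le>n. monom (of_nat (fact (n+k)) / (of_nat (fact (n-k)) * of_nat (fact k)) / 2 ^ k) k)"

text \<open>The set of zeros of y_n (they are simple, so summing over this set is summing over k = 1..n).\<close>
definition bessel_zeros :: "nat \<Rightarrow> complex set" where
  "bessel_zeros n = {\<alpha>. poly (bessel_poly n) \<alpha> = 0}"

definition r_n :: "nat \<Rightarrow> (complex \<Rightarrow> complex) \<Rightarrow> complex \<Rightarrow> complex" where
  "r_n n f z = z * deriv f z
     - (\<Sum>\<alpha>\<in>bessel_zeros n. f ((1 - \<alpha>/2) * z) - f ((1 + \<alpha>/2) * z))"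

definition n0 :: "real \<Rightarrow> real" where
  "n0 x = max 14 (x^2 / (1-x)^2) - 1"

end

theory Submission imports Defs "HOL-Complex_Analysis.Complex_Analysis" "HOL-Computational_Algebra.Fundamental_Theorem_Algebra" begin

definition bc :: "nat \<Rightarrow> nat \<Rightarrow> complex" where
  "bc n k = of_nat (fact (n+k)) / (of_nat (fact (n-k)) * of_nat (fact k))"

definition Yp :: "nat \<Rightarrow> complex poly" where
  "Yp n = (\<Sum>k\<le>n. monom (bc n k) k)"

lemma coeff_Yp: "coeff (Yp n) j = (if j \<le> n then bc n j else 0)"
  unfolding Yp_def by (auto simp: coeff_sum coeff_monom)

lemma poly_bessel: "poly (bessel_poly n) (2*u) = poly (Yp n) u"
  unfolding bessel_poly_def Yp_def bc_def
  by (auto simp: poly_sum poly_monom power_mult_distrib intro!: sum.cong)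

lemma bc_rec:
  assumes "k < n"
  shows "of_nat (Suc k) * bc n (Suc k) = of_nat (n-k) * of_nat (n+k+1) * bc n k"
proof -
  have f1: "fact (n-k) = of_nat (n-k) * (fact (n - Suc k) :: complex)"
    using assms by (metis Suc_diff_Suc fact_Suc of_nat_fact)
  have f2: "fact (n + Suc k) = of_nat (n+k+1) * (fact (n + k) :: complex)"
    by (metis add_Suc_right fact_Suc of_nat_fact Suc_eq_plus1)
  have f3: "fact (Suc k) = of_nat (Suc k) * (fact k :: complex)"
    by simp
  have nz: "(of_nat (n-k)::complex) \<noteq> 0" using assms by simp
  have ff: "(fact k::complex) \<noteq> 0" "(fact (n - Suc k)::complex) \<noteq> 0" by auto
  show ?thesis unfolding bc_def of_nat_fact f1 f2 f3
    using nz ff by (simp add: field_simps del: fact_Suc of_nat_Suc)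
qed

lemma coeff_mult_monom': "coeff (p * monom c n) k = (if k < n then 0 else c * coeff p (k - n))"
  by (simp add: mult.commute[of p] coeff_monom_mult)

lemma bc0: "bc n 0 = 1" by (simp add: bc_def)

lemma coeff_rec: "of_nat (j*(j+1)) * coeff (Yp n) j + of_nat (Suc j) * coeff (Yp n) (Suc j)
       = of_nat (n*(n+1)) * coeff (Yp n) j"
proof (cases "j < n")
  case True
  have "of_nat (Suc j) * bc n (Suc j) = of_nat (n-j) * of_nat (n+j+1) * bc n j" by (rule bc_rec[OF True])
  moreover have "(of_nat (n-j)::complex) = of_nat n - of_nat j" using True by (simp add: of_nat_diff)
  ultimately show ?thesis using True by (simp add: coeff_Yp algebra_simps)
next
  case False
  then show ?thesis by (cases "j = n") (auto simp: coeff_Yp)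
qed

lemma Yp_ode: "monom 1 2 * pderiv (pderiv (Yp n)) + monom 2 1 * pderiv (Yp n) + pderiv (Yp n)
   = smult (of_nat (n*(n+1))) (Yp n)"
proof (rule poly_eqI)
  fix j
  consider "j = 0" | "j = 1" | i where "j = Suc (Suc i)" by (metis One_nat_def not0_implies_Suc)
  then show "coeff (monom 1 2 * pderiv (pderiv (Yp n)) + monom 2 1 * pderiv (Yp n) + pderiv (Yp n)) j =
      coeff (smult (of_nat (n*(n+1))) (Yp n)) j"
  proof cases
    case 1 then show ?thesis using coeff_rec[of 0 n] by (simp add: coeff_monom_mult coeff_pderiv coeff_mult_monom')
  next
    case 2 then show ?thesis using coeff_rec[of 1 n] by (simp add: coeff_monom_mult coeff_pderiv coeff_mult_monom' algebra_simps)
  next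
    case 3 then show ?thesis using coeff_rec[of j n]
      by (simp add: coeff_monom_mult coeff_pderiv coeff_mult_monom' algebra_simps)
  qed
qed

lemma Yp_ode_pt: "u^2 * poly (pderiv (pderiv (Yp n))) u + (2*u+1) * poly (pderiv (Yp n)) u
   = of_nat (n*(n+1)) * poly (Yp n) u"
  using arg_cong[OF Yp_ode, of "\<lambda>p. poly p u"] by (simp add: poly_monom algebra_simps)

lemma poly_neg_DERIV: "((\<lambda>u. poly p (-u)) has_field_derivative - poly (pderiv p) (-u)) (at u)"
proof -
  have "((\<lambda>u. poly p (uminus u)) has_field_derivative poly (pderiv p) (-u) * (-1)) (at u)"
    by (rule DERIV_chain2[where f="poly p" and g=uminus]) (auto intro: derivative_eq_intros)
  then show ?thesis by simp
qed

lemma wronsk: "u^2 * (poly (pderiv (Yp n)) u * poly (Yp n) (-u) + poly (Yp n) u * poly (pderiv (Yp n)) (-u))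
   + poly (Yp n) u * poly (Yp n) (-u) = 1"
proof -
  define Y where "Y = poly (Yp n)"
  define Y1 where "Y1 = poly (pderiv (Yp n))"
  define Y2 where "Y2 = poly (pderiv (pderiv (Yp n)))"
  define N where "N = (\<lambda>u. u^2 * (Y1 u * Y (-u) + Y u * Y1 (-u)) + Y u * Y (-u))"
  have dY: "\<And>u. (Y has_field_derivative Y1 u) (at u)" unfolding Y_def Y1_def by simp
  have dY1: "\<And>u. (Y1 has_field_derivative Y2 u) (at u)" unfolding Y2_def Y1_def by simp
  have dYn: "\<And>u. ((\<lambda>u. Y (-u)) has_field_derivative - Y1 (-u)) (at u)"
    unfolding Y_def Y1_def by (rule poly_neg_DERIV)
  have dY1n: "\<And>u. ((\<lambda>u. Y1 (-u)) has_field_derivative - Y2 (-u)) (at u)"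
    unfolding Y2_def Y1_def by (rule poly_neg_DERIV)
  have ode: "\<And>u. u^2 * Y2 u + (2*u+1) * Y1 u = of_nat (n*(n+1)) * Y u"
    unfolding Y_def Y1_def Y2_def by (rule Yp_ode_pt)
  have D: "(N has_field_derivative 0) (at u within UNIV)" for u
  proof -
    have "(N has_field_derivative (2*u*(Y1 u * Y (-u) + Y u * Y1 (-u)) + u^2 * (Y2 u * Y (-u) - Y1 u * Y1 (-u)
        + Y1 u * Y1 (-u) - Y u * Y2 (-u)) + (Y1 u * Y (-u) - Y u * Y1 (-u)))) (at u)"
      unfolding N_def
      by (rule derivative_eq_intros dY dY1 dYn dY1n refl | simp)+
    moreover have "2*u*(Y1 u * Y (-u) + Y u * Y1 (-u)) + u^2 * (Y2 u * Y (-u) - Y1 u * Y1 (-u)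
        + Y1 u * Y1 (-u) - Y u * Y2 (-u)) + (Y1 u * Y (-u) - Y u * Y1 (-u)) = 0"
    proof -
      have a: "u^2 * Y2 u = of_nat (n*(n+1)) * Y u - (2*u+1) * Y1 u" using ode[of u] by (simp add: algebra_simps)
      have b: "u^2 * Y2 (-u) = of_nat (n*(n+1)) * Y (-u) - (1-2*u) * Y1 (-u)" using ode[of "-u"] by (simp add: algebra_simps)
      have "u^2 * (Y2 u * Y (-u) - Y1 u * Y1 (-u) + Y1 u * Y1 (-u) - Y u * Y2 (-u))
          = (u^2 * Y2 u) * Y (-u) - Y u * (u^2 * Y2 (-u))" by (simp add: algebra_simps)
      also have "\<dots> = (of_nat (n*(n+1)) * Y u - (2*u+1) * Y1 u) * Y (-u) - Y u * (of_nat (n*(n+1)) * Y (-u) - (1-2*u) * Y1 (-u))"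
        by (simp only: a b)
      finally show ?thesis by (simp add: algebra_simps)
    qed
    ultimately show ?thesis by simp
  qed
  obtain c where c: "\<forall>x\<in>UNIV. N x = c"
    using has_field_derivative_zero_constant[of UNIV N] D by auto
  have "N 0 = 1" unfolding N_def Y_def by (simp add: poly_0_coeff_0 coeff_Yp bc0)
  then have "N u = 1" using c by auto
  then show ?thesis unfolding N_def Y_def Y1_def .
qed

lemma bc_nn: "bc n n = of_real (fact (2*n) / fact n)"
  by (simp add: bc_def mult_2)

lemma bc_nn_nz: "bc n n \<noteq> 0"
  by (simp add: bc_nn)

lemma Yp_nz: "Yp n \<noteq> 0"
proof
  assume "Yp n = 0"
  then have "coeff (Yp n) 0 = 0" by simp
  then show False by (simp add: coeff_Yp bc0)
qed

lemma degree_Yp: "degree (Yp n) = n"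
proof (rule antisym)
  show "degree (Yp n) \<le> n" by (rule degree_le) (auto simp: coeff_Yp)
  show "n \<le> degree (Yp n)" by (rule le_degree) (simp add: coeff_Yp bc_nn_nz)
qed

lemma lead_Yp: "lead_coeff (Yp n) = bc n n"
  by (simp add: degree_Yp coeff_Yp)

lemma root_props:
  assumes "poly (Yp n) b = 0"
  shows "b \<noteq> 0" "poly (pderiv (Yp n)) b \<noteq> 0" "poly (Yp n) (-b) \<noteq> 0"
proof -
  have "b^2 * (poly (pderiv (Yp n)) b * poly (Yp n) (-b)) = 1"
    using wronsk[of b n] assms by simp
  then show "b \<noteq> 0" "poly (pderiv (Yp n)) b \<noteq> 0" "poly (Yp n) (-b) \<noteq> 0" by auto
qed

lemma Yp_rsq: "rsquarefree (Yp n)"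
  unfolding rsquarefree_roots using root_props(2) by blast

definition R :: "nat \<Rightarrow> complex set" where "R n = {b. poly (Yp n) b = 0}"

lemma finite_R: "finite (R n)"
  unfolding R_def using Yp_nz poly_roots_finite by blast

lemma Yp_fact: "Yp n = smult (bc n n) (\<Prod>b\<in>R n. [:-b,1:])"
  using complex_poly_decompose_rsquarefree[OF Yp_rsq[of n]] unfolding R_def lead_Yp by simp

lemma card_R: "card (R n) = n"
proof -
  have "n = degree (smult (bc n n) (\<Prod>b\<in>R n. [:-b,1:]))"
    using Yp_fact[of n] degree_Yp[of n] by simp
  also have "\<dots> = degree (\<Prod>b\<in>R n. [:-b,1:])" using bc_nn_nz by simp
  also have "\<dots> = (\<Sum>b\<in>R n. degree [:-b,1:])" by (rule degree_prod_sum_eq) simp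
  also have "\<dots> = card (R n)" by simp
  finally show ?thesis by simp
qed

lemma poly_lin: "poly [:-s,1:] u = u - (s::complex)" by simp

lemma poly_pderiv_prod_lin:
  fixes u :: complex
  assumes "finite S" "u \<notin> S"
  shows "poly (pderiv (\<Prod>s\<in>S. [:-s,1:])) u = poly (\<Prod>s\<in>S. [:-s,1:]) u * (\<Sum>s\<in>S. 1/(u-s))"
proof -
  have e: "\<And>s. poly [:-s,1:] u = u - s" by (simp add: algebra_simps)
  have "poly (pderiv (\<Prod>s\<in>S. [:-s,1:])) u = (\<Sum>a\<in>S. \<Prod>s\<in>S-{a}. poly [:-s,1:] u)"
    by (simp add: pderiv_prod pderiv_pCons poly_sum poly_prod del: poly_pCons)
  also have "\<dots> = (\<Sum>a\<in>S. \<Prod>s\<in>S-{a}. (u - s))" by (simp only: e)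
  also have "\<dots> = (\<Sum>a\<in>S. (\<Prod>s\<in>S. (u-s)) * (1/(u-a)))"
  proof (rule sum.cong[OF refl])
    fix a assume a: "a \<in> S"
    have "(\<Prod>s\<in>S. (u-s)) = (u-a) * (\<Prod>s\<in>S-{a}. (u - s))"
      using a assms(1) by (simp add: prod.remove)
    moreover have "u - a \<noteq> 0" using a assms(2) by auto
    ultimately show "(\<Prod>s\<in>S-{a}. (u - s)) = (\<Prod>s\<in>S. (u-s)) * (1/(u-a))" by simp
  qed
  also have "\<dots> = poly (\<Prod>s\<in>S. [:-s,1:]) u * (\<Sum>s\<in>S. 1/(u-s))"
    by (simp add: poly_prod sum_distrib_left poly_lin del: poly_pCons)
  finally show ?thesis .
qed

lemma logderiv_Yp:
  assumes "u \<notin> R n"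
  shows "poly (pderiv (Yp n)) u = poly (Yp n) u * (\<Sum>b\<in>R n. 1/(u-b))"
proof -
  have "poly (pderiv (Yp n)) u = bc n n * poly (pderiv (\<Prod>b\<in>R n. [:-b,1:])) u"
    by (subst Yp_fact) (simp add: pderiv_smult)
  also have "\<dots> = bc n n * (poly (\<Prod>s\<in>R n. [:-s,1:]) u * (\<Sum>s\<in>R n. 1/(u-s)))"
    using poly_pderiv_prod_lin[OF finite_R assms] by simp
  also have "\<dots> = poly (Yp n) u * (\<Sum>b\<in>R n. 1/(u-b))"
    by (simp add: Yp_fact[of n])
  finally show ?thesis .
qed

lemma re_half:
  fixes b c :: complex
  assumes "norm c \<le> norm b" "c \<noteq> b"
  shows "Re (b/(b-c)) \<ge> 1/2"
proof -
  have d: "(cmod (b-c))^2 > 0" using assms(2) by simp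
  have sq: "(cmod c)^2 \<le> (cmod b)^2" using assms(1) by (simp add: power_mono)
  have e: "Re (b/(b-c)) = (Re b * Re (b-c) + Im b * Im (b-c)) / (cmod (b-c))^2"
    by (simp add: Re_divide cmod_power2)
  have m: "(cmod (b-c))^2 = (Re b - Re c)^2 + (Im b - Im c)^2" by (simp add: cmod_power2)
  have sq': "(Re c)^2 + (Im c)^2 \<le> (Re b)^2 + (Im b)^2" using sq by (simp add: cmod_power2)
  have "(cmod (b-c))^2 \<le> 2 * (Re b * Re (b-c) + Im b * Im (b-c))"
    unfolding m using sq' by (simp add: power2_eq_square algebra_simps)
  then show ?thesis unfolding e using d by (simp add: field_simps)
qed

lemma root_max_bound:
  assumes b0: "b0 \<in> R n" and mx: "\<forall>b\<in>R n. norm b \<le> norm b0"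
  shows "norm b0 \<le> 1 / (real n + 1)"
proof -
  define S where "S = R n - {b0}"
  define Q where "Q = smult (bc n n) (\<Prod>b\<in>S. [:-b,1:])"
  have fS: "finite S" unfolding S_def using finite_R by simp
  have b0S: "b0 \<notin> S" unfolding S_def by simp
  have YQ: "Yp n = [:-b0,1:] * Q"
    unfolding Q_def S_def using b0 finite_R
    by (subst Yp_fact) (simp add: prod.remove[of "R n" b0] mult_ac)
  have pl: "pderiv [:-b0,1:] = 1" by (simp add: pderiv_pCons)
  have Y1: "poly (pderiv (Yp n)) b0 = poly Q b0"
    unfolding YQ pderiv_mult pl by simp
  have Y2: "poly (pderiv (pderiv (Yp n))) b0 = 2 * poly (pderiv Q) b0"
    unfolding YQ pderiv_mult pl pderiv_add pderiv_1 by simp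
  have Q1: "poly (pderiv Q) b0 = poly Q b0 * (\<Sum>b\<in>S. 1/(b0-b))"
    unfolding Q_def using poly_pderiv_prod_lin[OF fS b0S] by (simp add: pderiv_smult)
  have r0: "poly (Yp n) b0 = 0" using b0 unfolding R_def by simp
  have nzQ: "poly Q b0 \<noteq> 0" using root_props(2)[OF r0] Y1 by simp
  have b0nz: "b0 \<noteq> 0" using root_props(1)[OF r0] .
  have "b0^2 * (2 * (poly Q b0 * (\<Sum>b\<in>S. 1/(b0-b)))) + (2*b0+1) * poly Q b0 = 0"
    using Yp_ode_pt[of b0 n] r0 Y1 Y2 Q1 by simp
  then have "poly Q b0 * (2 * b0^2 * (\<Sum>b\<in>S. 1/(b0-b)) + (2*b0+1)) = 0"
    by (simp add: algebra_simps)
  then have eq: "2 * b0^2 * (\<Sum>b\<in>S. 1/(b0-b)) = -(2*b0+1)" using nzQ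
    by (simp add: add_eq_0_iff)
  have sumeq: "(\<Sum>b\<in>S. b0/(b0-b)) = -1 - 1/(2*b0)"
  proof -
    have "(\<Sum>b\<in>S. b0/(b0-b)) = b0 * (\<Sum>b\<in>S. 1/(b0-b))" by (simp add: sum_distrib_left)
    also have "\<dots> = (2 * b0^2 * (\<Sum>b\<in>S. 1/(b0-b))) / (2*b0)" using b0nz by (simp add: power2_eq_square field_simps)
    also have "\<dots> = -1 - 1/(2*b0)" unfolding eq using b0nz by (simp add: field_simps)
    finally show ?thesis .
  qed
  have cS: "card S = n - 1" unfolding S_def using b0 finite_R card_R by simp
  have "real (card S) / 2 = (\<Sum>b\<in>S. 1/2)" by simp
  also have "\<dots> \<le> (\<Sum>b\<in>S. Re (b0/(b0-b)))"
  proof (rule sum_mono)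
    fix b assume "b \<in> S"
    then have "norm b \<le> norm b0" "b \<noteq> b0" using mx unfolding S_def by auto
    then show "1/2 \<le> Re (b0/(b0-b))" by (rule re_half)
  qed
  also have "\<dots> = Re (-1 - 1/(2*b0))" by (simp add: sumeq[symmetric])
  also have "\<dots> = -1 - Re (1/b0) / 2"
  proof -
    have h: "1/(2*b0) = (1/2::real) *\<^sub>R (1/b0)" by (simp add: scaleR_conv_of_real)
    show ?thesis unfolding h by simp
  qed
  finally have ineq: "real (card S) / 2 \<le> -1 - Re (1/b0) / 2" .
  have n1: "n \<ge> 1" using b0 card_R[of n] finite_R[of n] by (metis card_0_eq empty_iff less_one not_le)
  have "real n + 1 \<le> - Re (1/b0)" using ineq cS n1 by (simp add: of_nat_diff)
  also have "\<dots> \<le> norm (1/b0)" using abs_Re_le_cmod[of "1/b0"] by linarith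
  finally have "real n + 1 \<le> 1 / norm b0" by (simp add: norm_divide)
  then show ?thesis using b0nz by (simp add: field_simps)
qed

lemma root_bound:
  assumes "b \<in> R n"
  shows "norm b \<le> 1 / (real n + 1)"
proof -
  have ne: "R n \<noteq> {}" using assms by auto
  have "Max (norm ` R n) \<in> norm ` R n" using Max_in[of "norm ` R n"] finite_R ne by auto
  then obtain b0 where b0: "b0 \<in> R n" "norm b0 = Max (norm ` R n)" by auto
  have mx: "\<forall>b\<in>R n. norm b \<le> norm b0" using b0(2) finite_R by auto
  show ?thesis using root_max_bound[OF b0(1) mx] mx assms by force
qed

lemma Yp_lower:
  assumes "1 / (real n + 1) \<le> norm u"
  shows "norm (poly (Yp n) u) \<ge> (fact (2*n) / fact n) * (norm u - 1/(real n + 1))^n"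
proof -
  have "norm (poly (Yp n) u) = (fact (2*n) / fact n) * (\<Prod>b\<in>R n. norm (u - b))"
  proof -
    define c where "c = (fact (2*n) / fact n :: real)"
    have c0: "c \<ge> 0" unfolding c_def by simp
    have "poly (Yp n) u = of_real c * (\<Prod>b\<in>R n. (u - b))"
      unfolding c_def by (subst Yp_fact) (simp add: poly_prod bc_nn poly_lin del: poly_pCons of_real_divide)
    then have "norm (poly (Yp n) u) = c * (\<Prod>b\<in>R n. norm (u - b))"
      using c0 by (simp add: norm_mult prod_norm del: of_real_divide)
    then show ?thesis unfolding c_def .
  qed
  moreover have "(\<Prod>b\<in>R n. norm u - 1/(real n + 1)) \<le> (\<Prod>b\<in>R n. norm (u - b))"
  proof (rule prod_mono)
    fix b assume "b \<in> R n"
    then have "norm b \<le> 1/(real n + 1)" by (rule root_bound)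
    moreover have "norm u - norm b \<le> norm (u - b)" by (rule norm_triangle_ineq2)
    ultimately show "0 \<le> norm u - 1/(real n + 1) \<and> norm u - 1/(real n + 1) \<le> norm (u - b)"
      using assms by linarith
  qed
  ultimately show ?thesis by (simp add: card_R) (intro divide_right_mono mult_left_mono, auto)
qed

lemma kernel_eq:
  assumes u: "u \<notin> R n" "-u \<notin> R n" "u \<noteq> 0"
  shows "1/u^2 - (\<Sum>b\<in>R n. 1/(u+b) - 1/(u-b)) = 1/(u^2 * poly (Yp n) u * poly (Yp n) (-u))"
proof -
  define Y where "Y = poly (Yp n)"
  define Y1 where "Y1 = poly (pderiv (Yp n))"
  have Yu: "Y u \<noteq> 0" "Y (-u) \<noteq> 0" using u unfolding R_def Y_def by auto
  have s1: "(\<Sum>b\<in>R n. 1/(u-b)) = Y1 u / Y u"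
    using logderiv_Yp[OF u(1)] Yu unfolding Y_def Y1_def by (simp add: field_simps)
  have s2: "(\<Sum>b\<in>R n. 1/(-u-b)) = Y1 (-u) / Y (-u)"
    using logderiv_Yp[OF u(2)] Yu unfolding Y_def Y1_def by (simp add: field_simps)
  have s3: "(\<Sum>b\<in>R n. 1/(u+b)) = - (\<Sum>b\<in>R n. 1/(-u-b))"
  proof -
    have "\<And>b. 1/(u+b) = - (1/(-u-b))"
    proof -
      fix b :: complex
      have "-u-b = -(u+b)" by simp
      then show "1/(u+b) = - (1/(-u-b))" by (simp only: divide_minus_right minus_minus)
    qed
    then show ?thesis by (simp add: sum_negf)
  qed
  have w: "u^2 * (Y1 u * Y (-u) + Y u * Y1 (-u)) + Y u * Y (-u) = 1"
    using wronsk[of u n] unfolding Y_def Y1_def .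
  have "1/u^2 - (\<Sum>b\<in>R n. 1/(u+b) - 1/(u-b)) = 1/u^2 + Y1 (-u) / Y (-u) + Y1 u / Y u"
    by (simp add: sum_subtractf s1 s2 s3)
  also have "\<dots> = (u^2 * (Y1 u * Y (-u) + Y u * Y1 (-u)) + Y u * Y (-u)) / (u^2 * Y u * Y (-u))"
    using Yu u(3) by (simp add: field_simps power2_eq_square)
  also have "\<dots> = 1/(u^2 * Y u * Y (-u))" by (simp only: w)
  finally show ?thesis unfolding Y_def .
qed

lemma bessel_zeros_R: "bessel_zeros n = (\<lambda>b. 2*b) ` R n"
proof -
  have "a \<in> bessel_zeros n \<longleftrightarrow> a/2 \<in> R n" for a
    unfolding bessel_zeros_def R_def using poly_bessel[of n "a/2"] by simp
  then show ?thesis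
    by (auto simp: image_iff) (metis nonzero_mult_div_cancel_left times_divide_eq_right zero_neq_numeral)
qed

lemma r_n_R: "r_n n f z = z * deriv f z - (\<Sum>b\<in>R n. f ((1 - b) * z) - f ((1 + b) * z))"
proof -
  have "(\<Sum>\<alpha>\<in>bessel_zeros n. f ((1 - \<alpha>/2) * z) - f ((1 + \<alpha>/2) * z))
      = (\<Sum>b\<in>R n. f ((1 - b) * z) - f ((1 + b) * z))"
    unfolding bessel_zeros_R by (subst sum.reindex) (auto simp: inj_on_def)
  then show ?thesis unfolding r_n_def by simp
qed

lemma main_bound:
  fixes f :: "complex \<Rightarrow> complex"
  assumes hol: "f holomorphic_on ball 0 1" and R0: "R0 < 1"
    and Mb: "\<And>w. norm w \<le> R0 \<Longrightarrow> norm (f w) \<le> M"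
    and z: "z \<noteq> 0" and rho: "1/(real n + 1) < \<rho>" and zr: "(1+\<rho>) * norm z \<le> R0"
  shows "norm (r_n n f z) \<le> M / (\<rho> * ((fact (2*n)/fact n) * (\<rho> - 1/(real n + 1))^n)^2)"
proof -
  define \<phi> where "\<phi> = (\<lambda>t. f (t*z))"
  define B where "B = 1/(real n + 1)"
  define A where "A = (fact (2*n)/fact n :: real)"
  have Bpos: "B > 0" unfolding B_def by simp
  have rpos: "\<rho> > 0" using rho Bpos unfolding B_def by linarith
  have nz: "norm z > 0" using z by simp
  have R0pos: "R0 > 0" using zr rpos nz by (smt (verit) mult_pos_pos)
  have M0: "0 \<le> M" using Mb[of 0] R0pos by (smt (verit) norm_ge_zero norm_zero)
  define U where "U = {t. norm (t*z) < 1}"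
  have cU: "cball (1::complex) \<rho> \<subseteq> {t. norm (t*z) \<le> R0}"
  proof
    fix t :: complex assume "t \<in> cball 1 \<rho>"
    then have "norm t \<le> 1 + \<rho>" using norm_triangle_ineq2[of t 1] by (simp add: dist_norm norm_minus_commute)
    then have "norm t * norm z \<le> (1+\<rho>) * norm z" using nz by (simp add: mult_right_mono)
    then show "t \<in> {t. norm (t*z) \<le> R0}" using zr by (simp add: norm_mult)
  qed
  have cU': "cball 1 \<rho> \<subseteq> U" using cU R0 unfolding U_def by force
  have holphi: "\<phi> holomorphic_on U"
  proof -
    have "((f \<circ> (\<lambda>t. t*z))) holomorphic_on U"
      by (rule holomorphic_on_compose_gen[where t="ball 0 1"]) (auto intro!: holomorphic_intros hol simp: U_def)
    then show ?thesis unfolding \<phi>_def comp_def .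
  qed
  have contphi: "continuous_on (cball 1 \<rho>) \<phi>"
    using holomorphic_on_imp_continuous_on[OF holphi] cU' continuous_on_subset by blast
  have holphi': "\<phi> holomorphic_on ball 1 \<rho>"
    using holphi cU' ball_subset_cball holomorphic_on_subset by blast
  have rootsin: "norm b \<le> B" if "b \<in> R n" for b using root_bound[OF that] unfolding B_def .
  have zin: "z \<in> ball 0 1" using cU' unfolding U_def by (metis (mono_tags) centre_in_cball less_imp_le mem_Collect_eq mult_1 rpos subsetD mem_ball_0)
  have df: "(f has_field_derivative deriv f z) (at z)"
    using holomorphic_derivI[OF hol open_ball zin] by simp
  have dphi: "(\<phi> has_field_derivative deriv f z * z) (at 1)"
  proof -
    have lin: "((\<lambda>t. t*z) has_field_derivative z) (at 1)" by (auto intro!: derivative_eq_intros)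
    have df1: "(f has_field_derivative deriv f z) (at ((\<lambda>t. t*z) 1))" using df by simp
    have "((\<lambda>t. f (t*z)) has_field_derivative deriv f z * z) (at 1)"
      using DERIV_chain2[OF df1 lin] by simp
    then show ?thesis unfolding \<phi>_def .
  qed
  have w1: "1 \<in> ball 1 \<rho>" using rpos by simp
  note CD = Cauchy_derivative_integral_circlepath[OF contphi holphi' w1]
  have "deriv f z * z = 1 / (2 * of_real pi * \<i>) * contour_integral (circlepath 1 \<rho>) (\<lambda>u. \<phi> u / (u-1)^2)"
    using DERIV_unique[OF dphi CD(2)] .
  then have CIeq: "contour_integral (circlepath 1 \<rho>) (\<lambda>u. \<phi> u / (u-1)^2) = 2 * of_real pi * \<i> * (deriv f z * z)"
    by (simp add: field_simps)
  have I1: "((\<lambda>u. \<phi> u / (u-1)^2) has_contour_integral (2 * of_real pi * \<i> * (deriv f z * z))) (circlepath 1 \<rho>)"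
    using has_contour_integral_integral[OF CD(1)] unfolding CIeq .
  have I2: "((\<lambda>u. \<phi> u / (u - (1-b)) - \<phi> u / (u - (1+b))) has_contour_integral
             (2 * of_real pi * \<i> * \<phi> (1-b) - 2 * of_real pi * \<i> * \<phi> (1+b))) (circlepath 1 \<rho>)"
    if b: "b \<in> R n" for b
  proof (rule has_contour_integral_diff)
    have nb: "norm b < \<rho>" using rootsin[OF b] rho unfolding B_def by linarith
    show "((\<lambda>u. \<phi> u / (u - (1-b))) has_contour_integral (2 * of_real pi * \<i> * \<phi> (1-b))) (circlepath 1 \<rho>)"
      by (rule Cauchy_integral_circlepath[OF contphi holphi']) (use nb in simp)
    show "((\<lambda>u. \<phi> u / (u - (1+b))) has_contour_integral (2 * of_real pi * \<i> * \<phi> (1+b))) (circlepath 1 \<rho>)"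
      by (rule Cauchy_integral_circlepath[OF contphi holphi']) (use nb in simp)
  qed
  have Isum: "((\<lambda>u. \<Sum>b\<in>R n. \<phi> u / (u - (1-b)) - \<phi> u / (u - (1+b))) has_contour_integral
             (\<Sum>b\<in>R n. 2 * of_real pi * \<i> * \<phi> (1-b) - 2 * of_real pi * \<i> * \<phi> (1+b))) (circlepath 1 \<rho>)"
    by (rule has_contour_integral_sum[OF finite_R]) (rule I2)
  have Itot: "((\<lambda>u. \<phi> u / (u-1)^2 - (\<Sum>b\<in>R n. \<phi> u / (u - (1-b)) - \<phi> u / (u - (1+b)))) has_contour_integral
             (2 * of_real pi * \<i> * r_n n f z)) (circlepath 1 \<rho>)"
  proof -
    have "2 * of_real pi * \<i> * (deriv f z * z) - (\<Sum>b\<in>R n. 2 * of_real pi * \<i> * \<phi> (1-b) - 2 * of_real pi * \<i> * \<phi> (1+b))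
        = 2 * of_real pi * \<i> * r_n n f z"
    proof -
      have "(\<Sum>b\<in>R n. 2 * of_real pi * \<i> * \<phi> (1-b) - 2 * of_real pi * \<i> * \<phi> (1+b))
          = 2 * of_real pi * \<i> * (\<Sum>b\<in>R n. \<phi> (1-b) - \<phi> (1+b))"
        by (simp add: sum_distrib_left right_diff_distrib)
      then show ?thesis unfolding r_n_R \<phi>_def by (simp add: right_diff_distrib mult.commute)
    qed
    then show ?thesis using has_contour_integral_diff[OF I1 Isum] by simp
  qed
  define Bd where "Bd = M / (\<rho>^2 * (A * (\<rho> - B)^n)^2)"
  have bound: "norm (\<phi> u / (u-1)^2 - (\<Sum>b\<in>R n. \<phi> u / (u - (1-b)) - \<phi> u / (u - (1+b)))) \<le> Bd"
    if u: "norm (u - 1) = \<rho>" for u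
  proof -
    define v where "v = u - 1"
    have nv: "norm v = \<rho>" using u unfolding v_def .
    have vR: "v \<notin> R n" using rootsin nv rho unfolding B_def by force
    have vR': "-v \<notin> R n" using rootsin nv rho unfolding B_def by force
    have v0: "v \<noteq> 0" using nv rpos by auto
    have "\<phi> u / (u-1)^2 - (\<Sum>b\<in>R n. \<phi> u / (u - (1-b)) - \<phi> u / (u - (1+b)))
        = \<phi> u * (1/v^2 - (\<Sum>b\<in>R n. 1/(v+b) - 1/(v-b)))"
      unfolding v_def by (simp add: sum_distrib_left right_diff_distrib algebra_simps)
    also have "\<dots> = \<phi> u * (1/(v^2 * poly (Yp n) v * poly (Yp n) (-v)))"
      using kernel_eq[OF vR vR' v0] by simp
    finally have e: "\<phi> u / (u-1)^2 - (\<Sum>b\<in>R n. \<phi> u / (u - (1-b)) - \<phi> u / (u - (1+b)))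
        = \<phi> u / (v^2 * poly (Yp n) v * poly (Yp n) (-v))" by simp
    have uin: "u \<in> cball 1 \<rho>" using u by (simp add: dist_norm norm_minus_commute)
    have pb: "norm (\<phi> u) \<le> M" unfolding \<phi>_def using cU uin Mb by auto
    have Bl: "B \<le> norm v" using nv rho unfolding B_def by simp
    have l1: "A * (\<rho> - B)^n \<le> norm (poly (Yp n) v)" using Yp_lower[of n v] Bl nv unfolding A_def B_def by simp
    have l2: "A * (\<rho> - B)^n \<le> norm (poly (Yp n) (-v))" using Yp_lower[of n "-v"] Bl nv unfolding A_def B_def by simp
    have Apos: "A * (\<rho> - B)^n > 0" unfolding A_def using rho unfolding B_def by simp
    have den: "\<rho>^2 * (A * (\<rho> - B)^n)^2 \<le> norm (v^2 * poly (Yp n) v * poly (Yp n) (-v))"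
    proof -
      have "(A * (\<rho> - B)^n)^2 \<le> norm (poly (Yp n) v) * norm (poly (Yp n) (-v))"
        unfolding power2_eq_square using l1 l2 Apos by (intro mult_mono) auto
      then have "\<rho>^2 * (A * (\<rho> - B)^n)^2 \<le> \<rho>^2 * (norm (poly (Yp n) v) * norm (poly (Yp n) (-v)))"
        by (rule mult_left_mono) simp
      then show ?thesis by (simp add: norm_mult nv norm_power mult.assoc)
    qed
    have dpos: "\<rho>^2 * (A * (\<rho> - B)^n)^2 > 0" using Apos rpos by (metis mult_pos_pos zero_less_power)
    have "norm (\<phi> u / (v^2 * poly (Yp n) v * poly (Yp n) (-v))) \<le> M / (\<rho>^2 * (A * (\<rho> - B)^n)^2)"
      unfolding norm_divide using pb den dpos M0 by (intro frac_le) auto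
    then show ?thesis unfolding e Bd_def .
  qed
  have Bd0: "0 \<le> Bd" unfolding Bd_def using M0 by simp
  have "norm (2 * of_real pi * \<i> * r_n n f z) \<le> Bd * (2 * pi * \<rho>)"
    by (rule has_contour_integral_bound_circlepath[OF Itot Bd0 rpos bound])
  then have "2 * pi * norm (r_n n f z) \<le> Bd * (2 * pi * \<rho>)" by (simp add: norm_mult)
  then have "norm (r_n n f z) \<le> Bd * \<rho>" by (simp add: field_simps)
  also have "Bd * \<rho> = M / (\<rho> * (A * (\<rho> - B)^n)^2)"
    unfolding Bd_def using rpos by (simp add: power2_eq_square field_simps)
  finally show ?thesis unfolding A_def B_def .
qed

lemma final_ineq:
  fixes \<epsilon> x M :: real and n N :: nat
  assumes e: "0 < \<epsilon>" "\<epsilon> < 1" and x: "0 < x" "x < 1" and M: "0 < M"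
    and n14: "14 \<le> real n + 1" and nx: "x^2 / (1-x)^2 \<le> real n + 1"
    and \<kappa>_def: "\<kappa> = (1 - \<epsilon>/4) * (1 - \<epsilon>/2) / (1 - \<epsilon>)"
    and N: "1 / (\<kappa> - 1)^2 \<le> real N + 1"
    and \<rho>_def: "\<rho> = (1 - \<epsilon>/4) / ((1-\<epsilon>) * x) - 1"
  shows "1/(real n + 1) < \<rho>"
    and "M / (\<rho> * ((fact (2*n)/fact n) * (\<rho> - 1/(real n + 1))^n)^2)
         \<le> (M * 4^N) * ((1 - \<epsilon>/2) ^ (2*n) * x ^ (2*n+1) / (1 - x) ^ (2*n+2))
              * ((fact n)^2 / (fact (2*n))^2)"
proof -
  define e2 where "e2 = 1 - \<epsilon>/2"
  define R0 where "R0 = 1 - \<epsilon>/4"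
  define s where "s = (1-x)/x"
  define t where "t = 1 / sqrt (real n + 1)"
  define B where "B = 1 / (real n + 1)"
  define A where "A = (fact (2*n)/fact n :: real)"
  have e2pos: "0 < e2" "e2 \<le> 1" unfolding e2_def using e by auto
  have spos: "0 < s" unfolding s_def using x by simp
  have kap: "\<kappa> > 1"
  proof -
    have q: "(1 - \<epsilon>/4) * (1 - \<epsilon>/2) = 1 - \<epsilon> + (\<epsilon>/4 + \<epsilon>^2/8)" by (simp add: algebra_simps power2_eq_square)
    have "\<epsilon>^2 \<ge> 0" by simp
    then have "(1 - \<epsilon>/4) * (1 - \<epsilon>/2) > 1 - \<epsilon>" unfolding q using e by linarith
    moreover have "1 - \<epsilon> > 0" using e by simp
    ultimately show ?thesis unfolding \<kappa>_def by simp
  qed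
  have npos: "0 < real n + 1" by simp
  have hs: "1 \<le> s^2 * (real n + 1)"
  proof -
    have h0: "x^2 / (1-x)^2 * s^2 = (x/(1-x) * s)^2" by (simp add: power_mult_distrib power_divide)
    have h1: "x/(1-x) * s = 1" unfolding s_def using x by simp
    have h2: "x^2 / (1-x)^2 * s^2 = 1" unfolding h0 h1 by simp
    have "x^2 / (1-x)^2 * s^2 \<le> (real n + 1) * s^2" by (rule mult_right_mono[OF nx]) simp
    then have "1 \<le> (real n + 1) * s^2" using h2 by linarith
    then show ?thesis by (simp add: mult.commute)
  qed
  have sq: "sqrt (real n + 1) ^ 2 = real n + 1" by simp
  have sqpos: "sqrt (real n + 1) > 0" by simp
  have ts: "t \<le> s"
  proof -
    have "1 \<le> sqrt (s^2 * (real n + 1))" using hs by simp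
    also have "sqrt (s^2 * (real n + 1)) = s * sqrt (real n + 1)" using spos by (simp add: real_sqrt_mult)
    finally show ?thesis unfolding t_def using sqpos by (simp add: field_simps)
  qed
  have tpos: "0 < t" unfolding t_def by simp
  have Bt: "B = t^2" unfolding B_def t_def by (simp add: power_divide)
  have thalf: "t \<le> 1/2"
  proof -
    have "2 \<le> sqrt (real n + 1)" using n14 by (simp add: real_le_rsqrt)
    then show ?thesis unfolding t_def using sqpos by (simp add: field_simps)
  qed
  have \<rho>ge: "\<rho> \<ge> \<kappa> * s / e2"
  proof -
    have ke: "\<kappa> = R0 * e2 / (1-\<epsilon>)" unfolding \<kappa>_def R0_def e2_def by simp
    have nz: "e2 \<noteq> 0" "1 - \<epsilon> \<noteq> 0" "x \<noteq> 0" using e2pos e x by auto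
    have "\<kappa> * s / e2 = R0 * (1-x) / ((1-\<epsilon>) * x)" unfolding ke s_def using nz
      by (simp add: field_simps)
    also have "\<dots> \<le> (R0 - (1-\<epsilon>)*x) / ((1-\<epsilon>) * x)"
    proof (rule divide_right_mono)
      have "(1-\<epsilon>)*x \<le> R0*x" using e x unfolding R0_def by (intro mult_right_mono) auto
      then show "R0*(1-x) \<le> R0 - (1-\<epsilon>)*x" by (simp add: algebra_simps)
      show "0 \<le> (1-\<epsilon>) * x" using e x by simp
    qed
    also have "\<dots> = \<rho>" unfolding \<rho>_def R0_def[symmetric] using nz by (simp add: field_simps)
    finally show ?thesis .
  qed
  define c where "c = \<kappa> - t"
  have chalf: "c \<ge> 1/2" unfolding c_def using kap thalf by simp
  have \<rho>B: "\<rho> - B \<ge> (s/e2) * c"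
  proof -
    have "B \<le> t * s" unfolding Bt power2_eq_square using ts tpos by (simp add: mult_left_mono)
    also have "t * s \<le> t * s / e2" using e2pos tpos spos by (simp add: field_simps mult_le_cancel_left1)
    finally have "B \<le> t * s / e2" .
    moreover have "(s/e2) * c = \<kappa> * s / e2 - t * s / e2" unfolding c_def by (simp add: algebra_simps diff_divide_distrib)
    ultimately show ?thesis using \<rho>ge by linarith
  qed
  have scpos: "(s/e2) * c > 0" using spos e2pos chalf by simp
  have Brho: "B < \<rho>" using \<rho>B scpos by linarith
  show "1/(real n + 1) < \<rho>" using Brho unfolding B_def .
  have \<rho>s: "\<rho> \<ge> s"
  proof -
    have "s \<le> \<kappa> * s" using kap spos by simp
    also have "\<kappa> * s \<le> \<kappa> * s / e2" using kap spos e2pos by (simp add: le_divide_eq)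
    finally have "s \<le> \<kappa> * s / e2" .
    then show ?thesis using \<rho>ge by linarith
  qed
  have Apos: "A > 0" unfolding A_def by simp
  define K where "K = e2^(2*n) / (s^(2*n+1) * A^2)"
  have Kpos: "K > 0" unfolding K_def using e2pos spos Apos by simp
  have step1: "M / (\<rho> * (A * (\<rho> - B)^n)^2) \<le> M / (s * (A * ((s/e2) * c)^n)^2)"
  proof (rule divide_left_mono)
    have "(A * ((s/e2) * c)^n)^2 \<le> (A * (\<rho> - B)^n)^2"
      using \<rho>B scpos Apos by (intro power_mono mult_left_mono) auto
    then show "s * (A * ((s/e2) * c)^n)^2 \<le> \<rho> * (A * (\<rho> - B)^n)^2"
      using \<rho>s spos by (intro mult_mono) auto
    show "0 \<le> M" using M by simp
    show "0 < \<rho> * (A * (\<rho> - B) ^ n)\<^sup>2 * (s * (A * (s / e2 * c) ^ n)\<^sup>2)"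
      using scpos Apos spos \<rho>s \<rho>B e2pos chalf Brho by (intro mult_pos_pos zero_less_power) auto
  qed
  have pw: "\<And>y::real. (y^n)^2 = y^(2*n)" by (metis power_mult mult.commute)
  have step2: "M / (s * (A * ((s/e2) * c)^n)^2) = M * K / c^(2*n)"
  proof -
    have p1: "(A * ((s/e2) * c)^n)^2 = A^2 * s^(2*n) * c^(2*n) / e2^(2*n)"
      by (simp add: power_mult_distrib power_divide pw)
    have p2: "s * (A^2 * s^(2*n) * c^(2*n) / e2^(2*n)) = A^2 * s^(2*n+1) * c^(2*n) / e2^(2*n)"
      by simp
    have nz: "A \<noteq> 0" "s \<noteq> 0" "c \<noteq> 0" "e2 \<noteq> 0" using Apos spos chalf e2pos by auto
    show ?thesis unfolding p1 p2 K_def using nz by (simp add: field_simps)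
  qed
  have step3: "1 / c^(2*n) \<le> 4^N"
  proof (cases "N \<le> n")
    case True
    have "1/(real n + 1) \<le> (\<kappa>-1)^2"
    proof -
      have "1 / (\<kappa> - 1)^2 \<le> real n + 1" using N True by linarith
      then show ?thesis using kap by (simp add: field_simps)
    qed
    then have "t^2 \<le> (\<kappa>-1)^2" using Bt unfolding B_def by simp
    then have "t \<le> \<kappa> - 1" using kap tpos by (simp add: power2_le_iff_abs_le)
    then have "c \<ge> 1" unfolding c_def by simp
    then have "1 / c^(2*n) \<le> 1" by simp
    also have "1 \<le> (4::real)^N" by simp
    finally show ?thesis .
  next
    case False
    have "1 / c^(2*n) \<le> 1 / (1/2)^(2*n)"
      using chalf by (intro divide_left_mono power_mono) auto
    also have "\<dots> = 4^n" by (simp add: power_mult power_divide)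
    also have "(4::real)^n \<le> 4^N" using False by (intro power_increasing) auto
    finally show ?thesis .
  qed
  have step4: "(M * 4^N) * ((1 - \<epsilon>/2) ^ (2*n) * x ^ (2*n+1) / (1 - x) ^ (2*n+2))
              * ((fact n)^2 / (fact (2*n))^2) = M * 4^N * K / (1-x)"
  proof -
    have nz: "x \<noteq> 0" "1 - x \<noteq> 0" "(fact n::real) \<noteq> 0" "(fact (2*n)::real) \<noteq> 0" using x by auto
    have q1: "s^(2*n+1) = (1-x)^(2*n+1) / x^(2*n+1)" unfolding s_def by (simp add: power_divide)
    have q2: "A^2 = (fact (2*n))^2 / (fact n)^2" unfolding A_def by (simp add: power_divide)
    have q3: "(1-x)^(2*n+2) = (1-x)^(2*n+1) * (1-x)" by simp
    show ?thesis unfolding K_def q1 q2 q3 e2_def[symmetric] using nz by (simp add: field_simps)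
  qed
  have "M / (\<rho> * (A * (\<rho> - B)^n)^2) \<le> M * K / c^(2*n)" using step1 step2 by simp
  also have "\<dots> = M * K * (1 / c^(2*n))" by simp
  also have "\<dots> \<le> M * K * 4^N" using step3 M Kpos by (intro mult_left_mono) auto
  also have "\<dots> \<le> M * 4^N * K / (1-x)" using M Kpos x by (simp add: field_simps mult_le_cancel_left1)
  finally show "M / (\<rho> * ((fact (2*n)/fact n) * (\<rho> - 1/(real n + 1))^n)^2)
         \<le> (M * 4^N) * ((1 - \<epsilon>/2) ^ (2*n) * x ^ (2*n+1) / (1 - x) ^ (2*n+2))
              * ((fact n)^2 / (fact (2*n))^2)" unfolding step4 A_def B_def .
qed


theorem theorem2:
  fixes f :: "complex \<Rightarrow> complex" and \<epsilon> :: real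
  assumes "f holomorphic_on ball 0 1"
    and "0 < \<epsilon>" and "\<epsilon> < 1"
  shows "\<exists>C>0. \<forall>x::real. \<forall>n::nat. \<forall>z::complex.
           0 < x \<longrightarrow> x < 1 \<longrightarrow> real n \<ge> n0 x \<longrightarrow> norm z \<le> (1 - \<epsilon>) * x \<longrightarrow>
           norm (r_n n f z) \<le> C * ((1 - \<epsilon>/2) ^ (2*n) * x ^ (2*n+1) / (1 - x) ^ (2*n+2))
                                 * ((fact n)^2 / (fact (2*n))^2)"
proof -
  note hol = assms(1) and e = assms(2,3)
  define R0 where "R0 = 1 - \<epsilon>/4"
  have R0: "R0 < 1" unfolding R0_def using e by simp
  have cb: "cball 0 R0 \<subseteq> ball (0::complex) 1" using R0 by auto
  have "continuous_on (cball 0 R0) f"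
    using holomorphic_on_imp_continuous_on[OF hol] cb continuous_on_subset by blast
  then have "compact (f ` cball 0 R0)" by (intro compact_continuous_image) auto
  then obtain M where M: "M > 0" "\<forall>y\<in>f ` cball 0 R0. norm y \<le> M"
    using compact_imp_bounded bounded_pos by metis
  have Mb: "\<And>w. norm w \<le> R0 \<Longrightarrow> norm (f w) \<le> M" using M(2) by auto
  define \<kappa> where "\<kappa> = (1 - \<epsilon>/4) * (1 - \<epsilon>/2) / (1 - \<epsilon>)"
  define N where "N = nat \<lceil>1 / (\<kappa> - 1)^2\<rceil>"
  have N: "1 / (\<kappa> - 1)^2 \<le> real N + 1" unfolding N_def
    by (metis add.commute add_increasing2 less_eq_real_def real_nat_ceiling_ge zero_less_one)
  show ?thesis
  proof (intro exI[of _ "M * 4^N"] conjI allI impI)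
    show "0 < M * 4^N" using M by simp
    fix x :: real and n :: nat and z :: complex
    assume x: "0 < x" "x < 1" and nn: "n0 x \<le> real n" and zx: "norm z \<le> (1 - \<epsilon>) * x"
    have n14: "14 \<le> real n + 1" and nx: "x^2 / (1-x)^2 \<le> real n + 1"
      using nn unfolding n0_def by auto
    show "norm (r_n n f z) \<le> M * 4^N * ((1 - \<epsilon>/2) ^ (2*n) * x ^ (2*n+1) / (1 - x) ^ (2*n+2))
                                 * ((fact n)^2 / (fact (2*n))^2)"
    proof (cases "z = 0")
      case True
      have "r_n n f z = 0" unfolding True r_n_def by simp
      then show ?thesis using M x by simp
    next
      case False
      define \<rho> where "\<rho> = (1 - \<epsilon>/4) / ((1-\<epsilon>) * x) - 1"
      note FI = final_ineq[OF e x M(1) n14 nx \<kappa>_def N \<rho>_def]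
      have zr: "(1+\<rho>) * norm z \<le> R0"
      proof -
        have pos: "(1 - \<epsilon>) * x > 0" using e x by simp
        have "(1+\<rho>) = R0 / ((1-\<epsilon>) * x)" unfolding \<rho>_def R0_def by simp
        then have "(1+\<rho>) * norm z = R0 / ((1-\<epsilon>) * x) * norm z" by simp
        also have "\<dots> \<le> R0 / ((1-\<epsilon>) * x) * ((1-\<epsilon>) * x)"
          using zx pos R0 e unfolding R0_def by (intro mult_left_mono) auto
        also have "\<dots> = R0"
        proof -
          have "1 - \<epsilon> \<noteq> 0" "x \<noteq> 0" using e x by auto
          then show ?thesis by (simp add: field_simps)
        qed
        finally show ?thesis .
      qed
      have "norm (r_n n f z) \<le> M / (\<rho> * ((fact (2*n)/fact n) * (\<rho> - 1/(real n + 1))^n)^2)"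
        by (rule main_bound[OF hol R0 Mb False FI(1) zr])
      also have "\<dots> \<le> M * 4^N * ((1 - \<epsilon>/2) ^ (2*n) * x ^ (2*n+1) / (1 - x) ^ (2*n+2))
                                 * ((fact n)^2 / (fact (2*n))^2)"
        by (rule FI(2))
      finally show ?thesis .
    qed
  qed
qed

end
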